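(* Let $A,B$ be non-empty sets, $I$ a non-empty index set, $\{V_i\}_{i\in I}\subseteq\mathcal R(A)$, $\{W_i\}_{i\in I}\subseteq\mathcal R(B)$, ${\cal A}=(A,I,V_i)$, ${\cal B}=(B,I,W_i)$, let $R\in\mathcal R(A,B)$ be a uniform fuzzy relation and $Z\in\mathcal R(A,B)$ with $R\le Z$. Then $R$ is a solution to $WL^{2\text{-}3}(A,B,I,V_i,W_i,Z)$ if and only if all of the following hold: (i) $E_A^R$ is a solution to $WL^{1\text{-}4}(A,I,V_i,Z\circ Z^{-1})$; (ii) $E_B^R$ is a solution to $WL^{1\text{-}4}(B,I,W_i,Z^{-1}\circ Z)$; (iii) $\widetilde R$ is an isomorphism of the quotient fuzzy relational systems ${\cal A}/E_A^R$ and ${\cal B}/E_B^R$.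
   Context: $\mathcal L=(L,\wedge,\vee,\otimes,\to,0,1)$ is a complete residuated lattice; $x\leftrightarrow y=(x\to y)\wedge(y\to x)$. For non-empty sets $X,Y$, $\mathcal R(X,Y)$ is the set of fuzzy relations $X\times Y\to L$, $\mathcal R(X)=\mathcal R(X,X)$, ordered pointwise; $R^{-1}(y,x)=R(x,y)$; $(R\circ S)(x,t)=\bigvee_{y}R(x,y)\otimes S(y,t)$. For $R\in\mathcal R(A,B)$: kernel $E_A^R(a_1,a_2)=\bigwedge_{b\in B}R(a_1,b)\leftrightarrow R(a_2,b)$; co-kernel $E_B^R(b_1,b_2)=\bigwedge_{a\in A}R(a,b_1)\leftrightarrow R(a,b_2)$ (both fuzzy equivalences). $R$ is uniform if every $a$ has some $b$ with $R(a,b)=1$, every $b$ has some $a$ with $R(a,b)=1$, and $R(a,b_1)\otimes R(a,b_2)\le E_B^R(b_1,b_2)$ for all $a,b_1,b_2$. For uniform $R$, with $E=E_A^R$, $F=E_B^R$, the map $\widetilde R:A/E\to B/F$, $\widetilde R(E_a)=F_{\psi(a)}$, where $\psi:A\to B$ is any function with $R(a,\psi(a))=1$ for all $a$, is well defined (independent of choices) and bijective. For a fuzzy equivalence $E$ on $X$ (reflexive, symmetric, $E(x,y)\otimes E(y,z)\le E(x,z)$): $E_x(y)=E(x,y)$, $X/E=\{E_x\}$; the quotient of ${\cal X}=(X,I,V_i)$ is ${\cal X}/E=(X/E,I,V_i^{X/E})$ with $V_i^{X/E}(E_{x_1},E_{x_2})=(E\circ V_i\circ E)(x_1,x_2)$.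 An isomorphism of $(X,I,V_i)$ and $(Y,I,W_i)$ is a bijection $\varphi$ with $V_i(x_1,x_2)=W_i(\varphi(x_1),\varphi(x_2))$ for all $x_1,x_2$, $i$. $WL^{2\text{-}3}(A,B,I,V_i,W_i,Z)$ (unknown $U\in\mathcal R(A,B)$): $U^{-1}\circ V_i\le W_i\circ U^{-1}$ and $U\circ W_i\le V_i\circ U$ for all $i$, and $U\le Z$. $WL^{1\text{-}4}(X,I,V_i,W)$ (unknown $U\in\mathcal R(X)$): $U\circ V_i\le V_i\circ U$ and $U^{-1}\circ V_i\le V_i\circ U^{-1}$ for all $i$, and $U\le W$, $U^{-1}\le W$. *)

theory Defs
  imports Main
begin

definition complete_residuated_lattice ::
  "('l::complete_lattice \<Rightarrow> 'l \<Rightarrow> 'l) \<Rightarrow> ('l \<Rightarrow> 'l \<Rightarrow> 'l) \<Rightarrow> bool" where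
  "complete_residuated_lattice mul res \<longleftrightarrow>
     (\<forall>x y z. mul (mul x y) z = mul x (mul y z)) \<and>
     (\<forall>x y. mul x y = mul y x) \<and>
     (\<forall>x. mul x top = x) \<and>
     (\<forall>x y z. mul x y \<le> z \<longleftrightarrow> x \<le> res y z)"

definition biimp :: "('l::complete_lattice \<Rightarrow> 'l \<Rightarrow> 'l) \<Rightarrow> 'l \<Rightarrow> 'l \<Rightarrow> 'l" where
  "biimp res x y = inf (res x y) (res y x)"

definition rel_comp ::
  "('l::complete_lattice \<Rightarrow> 'l \<Rightarrow> 'l) \<Rightarrow> ('a \<Rightarrow> 'b \<Rightarrow> 'l) \<Rightarrow> ('b \<Rightarrow> 'c \<Rightarrow> 'l) \<Rightarrow> 'a \<Rightarrow> 'c \<Rightarrow> 'l" where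
  "rel_comp mul R S x t = (SUP y. mul (R x y) (S y t))"

definition rel_conv :: "('a \<Rightarrow> 'b \<Rightarrow> 'l) \<Rightarrow> 'b \<Rightarrow> 'a \<Rightarrow> 'l" where
  "rel_conv R y x = R x y"

definition fkernel :: "('l::complete_lattice \<Rightarrow> 'l \<Rightarrow> 'l) \<Rightarrow> ('a \<Rightarrow> 'b \<Rightarrow> 'l) \<Rightarrow> 'a \<Rightarrow> 'a \<Rightarrow> 'l" where
  "fkernel res R a1 a2 = (INF b. biimp res (R a1 b) (R a2 b))"

definition cokernel :: "('l::complete_lattice \<Rightarrow> 'l \<Rightarrow> 'l) \<Rightarrow> ('a \<Rightarrow> 'b \<Rightarrow> 'l) \<Rightarrow> 'b \<Rightarrow> 'b \<Rightarrow> 'l" where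
  "cokernel res R b1 b2 = (INF a. biimp res (R a b1) (R a b2))"

definition uniform_rel ::
  "('l::complete_lattice \<Rightarrow> 'l \<Rightarrow> 'l) \<Rightarrow> ('l \<Rightarrow> 'l \<Rightarrow> 'l) \<Rightarrow> ('a \<Rightarrow> 'b \<Rightarrow> 'l) \<Rightarrow> bool" where
  "uniform_rel mul res R \<longleftrightarrow>
     (\<forall>a. \<exists>b. R a b = top) \<and> (\<forall>b. \<exists>a. R a b = top) \<and>
     (\<forall>a b1 b2. mul (R a b1) (R a b2) \<le> cokernel res R b1 b2)"

text \<open>The map R~ : A/E -> B/F, E_a |-> F_psi(a) with R a (psi a) = 1
  (classes are represented as the functions E_a = E a).\<close>
definition rel_tilde ::
  "('l::complete_lattice \<Rightarrow> 'l \<Rightarrow> 'l) \<Rightarrow> ('a \<Rightarrow> 'b \<Rightarrow> 'l) \<Rightarrow> ('a \<Rightarrow> 'l) \<Rightarrow> ('b \<Rightarrow> 'l)" where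
  "rel_tilde res R C =
     (let a = (SOME a. fkernel res R a = C) in cokernel res R (SOME b. R a b = top))"

definition quot_carrier :: "('a \<Rightarrow> 'a \<Rightarrow> 'l) \<Rightarrow> ('a \<Rightarrow> 'l) set" where
  "quot_carrier E = range E"

definition quot_rel ::
  "('l::complete_lattice \<Rightarrow> 'l \<Rightarrow> 'l) \<Rightarrow> ('a \<Rightarrow> 'a \<Rightarrow> 'l) \<Rightarrow> ('i \<Rightarrow> 'a \<Rightarrow> 'a \<Rightarrow> 'l)
     \<Rightarrow> 'i \<Rightarrow> ('a \<Rightarrow> 'l) \<Rightarrow> ('a \<Rightarrow> 'l) \<Rightarrow> 'l" where
  "quot_rel mul E V i C1 C2 =
     rel_comp mul (rel_comp mul E (V i)) E (SOME x. E x = C1) (SOME x. E x = C2)"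

definition frs_iso ::
  "'x set \<Rightarrow> ('i \<Rightarrow> 'x \<Rightarrow> 'x \<Rightarrow> 'l) \<Rightarrow> 'y set \<Rightarrow> ('i \<Rightarrow> 'y \<Rightarrow> 'y \<Rightarrow> 'l) \<Rightarrow> ('x \<Rightarrow> 'y) \<Rightarrow> bool" where
  "frs_iso X V Y W \<phi> \<longleftrightarrow> bij_betw \<phi> X Y \<and>
     (\<forall>i. \<forall>x1\<in>X. \<forall>x2\<in>X. V i x1 x2 = W i (\<phi> x1) (\<phi> x2))"

definition WL23 ::
  "('l::complete_lattice \<Rightarrow> 'l \<Rightarrow> 'l) \<Rightarrow> ('i \<Rightarrow> 'a \<Rightarrow> 'a \<Rightarrow> 'l) \<Rightarrow> ('i \<Rightarrow> 'b \<Rightarrow> 'b \<Rightarrow> 'l)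
     \<Rightarrow> ('a \<Rightarrow> 'b \<Rightarrow> 'l) \<Rightarrow> ('a \<Rightarrow> 'b \<Rightarrow> 'l) \<Rightarrow> bool" where
  "WL23 mul V W Z U \<longleftrightarrow>
     (\<forall>i. rel_comp mul (rel_conv U) (V i) \<le> rel_comp mul (W i) (rel_conv U)) \<and>
     (\<forall>i. rel_comp mul U (W i) \<le> rel_comp mul (V i) U) \<and> U \<le> Z"

definition WL14 ::
  "('l::complete_lattice \<Rightarrow> 'l \<Rightarrow> 'l) \<Rightarrow> ('i \<Rightarrow> 'a \<Rightarrow> 'a \<Rightarrow> 'l) \<Rightarrow> ('a \<Rightarrow> 'a \<Rightarrow> 'l)
     \<Rightarrow> ('a \<Rightarrow> 'a \<Rightarrow> 'l) \<Rightarrow> bool" where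
  "WL14 mul V W U \<longleftrightarrow>
     (\<forall>i. rel_comp mul U (V i) \<le> rel_comp mul (V i) U) \<and>
     (\<forall>i. rel_comp mul (rel_conv U) (V i) \<le> rel_comp mul (V i) (rel_conv U)) \<and>
     U \<le> W \<and> rel_conv U \<le> W"

end

theory Submission
  imports Defs
begin

locale crl =
  fixes mul res :: "'l::complete_lattice \<Rightarrow> 'l \<Rightarrow> 'l"
  assumes crl: "complete_residuated_lattice mul res"
begin

lemma massoc: "mul (mul x y) z = mul x (mul y z)"
  using crl unfolding complete_residuated_lattice_def by blast
lemma mcomm: "mul x y = mul y x"
  using crl unfolding complete_residuated_lattice_def by blast
lemma munit: "mul x top = x"
  using crl unfolding complete_residuated_lattice_def by blast
lemma adj: "mul x y \<le> z \<longleftrightarrow> x \<le> res y z"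
  using crl unfolding complete_residuated_lattice_def by blast
lemma munit_l: "mul top x = x" using munit mcomm by metis

lemma mmono_l: "a \<le> b \<Longrightarrow> mul a c \<le> mul b c"
  by (meson adj order_refl order_trans)
lemma mmono: "a \<le> b \<Longrightarrow> c \<le> d \<Longrightarrow> mul a c \<le> mul b d"
  by (metis mcomm mmono_l order_trans)
lemma res_top: "res top z = z"
proof (rule antisym)
  show "res top z \<le> z" using adj[of "res top z" top z] munit by simp
  show "z \<le> res top z" using adj[of z top z] munit by simp
qed
lemma res_refl: "res z z = top"
  using adj[of top z z] munit_l by (simp add: top.extremum_unique)

lemma mulSUP_l: "mul (SUP y. f y) c = (SUP y. mul (f y) c)"
proof (rule antisym)
  have "(SUP y. f y) \<le> res c (SUP y. mul (f y) c)"
  proof (rule SUP_least)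
    fix y show "f y \<le> res c (SUP y. mul (f y) c)"
      unfolding adj[symmetric] by (rule SUP_upper) simp
  qed
  then show "mul (SUP y. f y) c \<le> (SUP y. mul (f y) c)" by (simp add: adj)
  show "(SUP y. mul (f y) c) \<le> mul (SUP y. f y) c"
    by (rule SUP_least) (rule mmono_l, rule SUP_upper, simp)
qed
lemma mulSUP_r: "mul c (SUP y. f y) = (SUP y. mul c (f y))"
  using mulSUP_l by (simp add: mcomm)

lemma comp_assoc: "rel_comp mul (rel_comp mul R S) T = rel_comp mul R (rel_comp mul S T)"
proof (intro ext)
  fix x t
  have "rel_comp mul (rel_comp mul R S) T x t = (SUP z. SUP y. mul (mul (R x y) (S y z)) (T z t))"
    by (simp add: rel_comp_def mulSUP_l)
  also have "... = (SUP y. SUP z. mul (R x y) (mul (S y z) (T z t)))"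
    by (subst SUP_commute) (simp add: massoc)
  also have "... = rel_comp mul R (rel_comp mul S T) x t"
    by (simp add: rel_comp_def mulSUP_r)
  finally show "rel_comp mul (rel_comp mul R S) T x t = rel_comp mul R (rel_comp mul S T) x t" .
qed

lemma comp_mono: "R \<le> R' \<Longrightarrow> S \<le> S' \<Longrightarrow> rel_comp mul R S \<le> rel_comp mul R' S'"
  unfolding le_fun_def rel_comp_def by (auto intro!: SUP_mono' mmono)

lemma conv_comp: "rel_conv (rel_comp mul R S) = rel_comp mul (rel_conv S) (rel_conv R)"
  by (intro ext) (simp add: rel_comp_def rel_conv_def mcomm)

lemma conv_mono: "R \<le> S \<Longrightarrow> rel_conv R \<le> rel_conv S"
  unfolding le_fun_def rel_conv_def by auto

definition feq :: "('x \<Rightarrow> 'x \<Rightarrow> 'l) \<Rightarrow> bool" where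
  "feq E \<longleftrightarrow> (\<forall>x. E x x = top) \<and> (\<forall>x y. E x y = E y x) \<and> (\<forall>x y z. mul (E x y) (E y z) \<le> E x z)"

lemma res_trans: "mul (res p q) (res q r) \<le> res p r"
proof -
  have "mul (mul (res p q) (res q r)) p = mul (res q r) (mul (res p q) p)"
    by (metis massoc mcomm)
  also have "... \<le> mul (res q r) q" by (rule mmono) (auto simp: adj)
  also have "... \<le> r" using adj[of "res q r" q r] by simp
  finally show ?thesis by (simp add: adj)
qed

lemma biimp_trans: "mul (biimp res p q) (biimp res q r) \<le> biimp res p r"
  unfolding biimp_def
proof (rule le_infI)
  show "mul (inf (res p q) (res q p)) (inf (res q r) (res r q)) \<le> res p r"
    by (rule order_trans[OF mmono[of _ "res p q" _ "res q r"] res_trans]) auto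
  show "mul (inf (res p q) (res q p)) (inf (res q r) (res r q)) \<le> res r p"
    by (subst mcomm, rule order_trans[OF mmono[of _ "res r q" _ "res q p"] res_trans]) auto
qed

lemma cokernel_feq: "feq (cokernel res R)"
  unfolding feq_def
proof (intro conjI allI)
  fix x y z
  show "cokernel res R x x = top" by (simp add: cokernel_def biimp_def res_refl)
  show "cokernel res R x y = cokernel res R y x" by (simp add: cokernel_def biimp_def inf_commute)
  show "mul (cokernel res R x y) (cokernel res R y z) \<le> cokernel res R x z"
    unfolding cokernel_def
  proof (rule INF_greatest)
    fix a
    have "mul (INF a. biimp res (R a x) (R a y)) (INF a. biimp res (R a y) (R a z))
       \<le> mul (biimp res (R a x) (R a y)) (biimp res (R a y) (R a z))"
      by (rule mmono) (auto intro: INF_lower)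
    also have "... \<le> biimp res (R a x) (R a z)" by (rule biimp_trans)
    finally show "mul (INF a. biimp res (R a x) (R a y)) (INF a. biimp res (R a y) (R a z))
       \<le> biimp res (R a x) (R a z)" .
  qed
qed

lemma fkernel_co: "fkernel res R = cokernel res (rel_conv R)"
  by (intro ext) (simp add: fkernel_def cokernel_def rel_conv_def)

lemma fkernel_feq: "feq (fkernel res R)"
  using cokernel_feq fkernel_co by metis

lemma feq_refl: "feq E \<Longrightarrow> E x x = top" by (simp add: feq_def)
lemma feq_sym: "feq E \<Longrightarrow> E x y = E y x" unfolding feq_def by blast
lemma feq_trans: "feq E \<Longrightarrow> mul (E x y) (E y z) \<le> E x z" unfolding feq_def by blast

lemma feq_conv: "feq E \<Longrightarrow> rel_conv E = E"
  by (intro ext) (simp add: rel_conv_def feq_sym)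

lemma feq_top_right: assumes "feq E" "E y z = top" shows "E x y = E x z"
proof (rule antisym)
  show "E x y \<le> E x z" using feq_trans[OF assms(1), of x y z] assms(2) munit by simp
  show "E x z \<le> E x y" using feq_trans[OF assms(1), of x z y] assms(2) munit feq_sym[OF assms(1), of z y] by simp
qed

lemma feq_top_eq: "feq E \<Longrightarrow> E x y = top \<Longrightarrow> E x = E y"
  by (intro ext) (metis feq_sym feq_top_right)

lemma feq_eq_top: "feq E \<Longrightarrow> E x = E y \<Longrightarrow> E x y = top"
  by (metis feq_refl)

lemma feq_comp_self: assumes "feq E" shows "rel_comp mul E E = E"
proof (intro ext antisym)
  fix x z
  show "rel_comp mul E E x z \<le> E x z"
    unfolding rel_comp_def by (rule SUP_least) (rule feq_trans[OF assms])
  show "E x z \<le> rel_comp mul E E x z"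
    unfolding rel_comp_def by (rule SUP_upper2[of z]) (simp_all add: feq_refl[OF assms] munit)
qed

lemma feq_INF_biimp: assumes "feq E" shows "(INF b. biimp res (E x b) (E y b)) = E x y"
proof (rule antisym)
  show "(INF b. biimp res (E x b) (E y b)) \<le> E x y"
    by (rule INF_lower2[of y]) (simp_all add: biimp_def feq_refl[OF assms] res_top le_infI2)
  show "E x y \<le> (INF b. biimp res (E x b) (E y b))"
  proof (rule INF_greatest)
    fix b
    have 1: "mul (E x y) (E x b) \<le> E y b" using feq_trans[OF assms, of y x b] feq_sym[OF assms, of x y] by simp
    have 2: "mul (E x y) (E y b) \<le> E x b" using feq_trans[OF assms, of x y b] by simp
    show "E x y \<le> biimp res (E x b) (E y b)"
      unfolding biimp_def using 1 2 by (simp add: adj)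
  qed
qed

lemma feq_refl_l: "feq E \<Longrightarrow> M \<le> rel_comp mul E M"
  unfolding le_fun_def rel_comp_def
proof (intro allI)
  fix x y assume "feq E"
  then show "M x y \<le> (SUP z. mul (E x z) (M z y))"
    by (intro SUP_upper2[of x]) (simp_all add: feq_refl munit_l)
qed
lemma feq_refl_r: "feq E \<Longrightarrow> M \<le> rel_comp mul M E"
  unfolding le_fun_def rel_comp_def
proof (intro allI)
  fix x y assume "feq E"
  then show "M x y \<le> (SUP z. mul (M x z) (E z y))"
    by (intro SUP_upper2[of y]) (simp_all add: feq_refl munit)
qed

lemma compat: assumes "feq E" "E x1 = E y1" "E x2 = E y2"
  shows "rel_comp mul (rel_comp mul E M) E x1 x2 = rel_comp mul (rel_comp mul E M) E y1 y2"
proof -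
  have "(\<lambda>z. E z x2) = (\<lambda>z. E z y2)" using assms by (metis feq_sym)
  then show ?thesis using assms(2) unfolding rel_comp_def by metis
qed

lemma quot_rel_eq: assumes "feq E"
  shows "quot_rel mul E V i (E a1) (E a2) = rel_comp mul (rel_comp mul E (V i)) E a1 a2"
proof -
  have 1: "E (SOME x. E x = E a1) = E a1" by (rule someI) simp
  have 2: "E (SOME x. E x = E a2) = E a2" by (rule someI) simp
  show ?thesis unfolding quot_rel_def by (rule compat[OF assms 1 2])
qed

lemma EVE_eq: assumes "feq E" "rel_comp mul E V \<le> rel_comp mul V E"
  shows "rel_comp mul (rel_comp mul E V) E = rel_comp mul V E"
proof (rule antisym)
  have "rel_comp mul (rel_comp mul E V) E \<le> rel_comp mul (rel_comp mul V E) E"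
    by (rule comp_mono[OF assms(2)]) simp
  also have "... = rel_comp mul V E" by (simp add: comp_assoc feq_comp_self[OF assms(1)])
  finally show "rel_comp mul (rel_comp mul E V) E \<le> rel_comp mul V E" .
  show "rel_comp mul V E \<le> rel_comp mul (rel_comp mul E V) E"
    using feq_refl_l[OF assms(1), of "rel_comp mul V E"] by (simp add: comp_assoc)
qed

end


locale unif = crl +
  fixes R
  assumes unif: "uniform_rel mul res R"
begin

definition psi where "psi a = (SOME b. R a b = top)"
definition phi where "phi b = (SOME a. R a b = top)"
abbreviation "E \<equiv> fkernel res R"
abbreviation "F \<equiv> cokernel res R"

lemma psi: "R a (psi a) = top"
proof -
  have "\<exists>b. R a b = top" using unif unfolding uniform_rel_def by (elim conjE) (erule allE)
  then show ?thesis unfolding psi_def by (rule someI_ex)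
qed
lemma phi: "R (phi b) b = top"
proof -
  have "\<exists>a. R a b = top" using unif unfolding uniform_rel_def by (elim conjE) (erule allE, erule allE)
  then show ?thesis unfolding phi_def by (rule someI_ex)
qed
lemma unif3: "mul (R a b1) (R a b2) \<le> F b1 b2"
  using unif unfolding uniform_rel_def by (elim conjE) (erule allE, erule allE, erule allE)
lemma F_le_res: "F b1 b2 \<le> res (R a b1) (R a b2)"
  unfolding cokernel_def biimp_def by (rule INF_lower2[of a]) auto

lemma Ff: "feq F" by (rule cokernel_feq)
lemma Ef: "feq E" by (rule fkernel_feq)

lemma K1: "R a b = F (psi a) b"
proof (rule antisym)
  show "R a b \<le> F (psi a) b" using unif3[of a "psi a" b] psi munit_l by simp
  show "F (psi a) b \<le> R a b" using F_le_res[of "psi a" b a] psi res_top by simp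
qed

lemma K3: "E a1 a2 = F (psi a1) (psi a2)"
proof -
  have "E a1 a2 = (INF b. biimp res (F (psi a1) b) (F (psi a2) b))"
    unfolding fkernel_def by (simp add: K1[symmetric])
  also have "... = F (psi a1) (psi a2)" by (rule feq_INF_biimp[OF Ff])
  finally show ?thesis .
qed

lemma Fpp: "F (psi (phi b)) = F b"
  using feq_top_eq[OF Ff] K1[of "phi b" b] phi by metis

lemma Fsym: "F x y = F y x" by (rule feq_sym[OF Ff])
lemma Esym: "E x y = E y x" by (rule feq_sym[OF Ef])

lemma K2: "R a b = E a (phi b)"
proof -
  have "E a (phi b) = F (psi a) (psi (phi b))" by (rule K3)
  also have "... = F (psi (phi b)) (psi a)" by (rule Fsym)
  also have "... = F b (psi a)" by (simp only: Fpp)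
  also have "... = R a b" by (simp only: Fsym K1)
  finally show ?thesis by simp
qed

lemma K1': "R a b = F b (psi a)" using K1 Fsym by simp
lemma K2': "R a b = E (phi b) a" using K2 Esym by simp

lemma SUPF: "(SUP y. mul (F x y) (F y z)) = F x z"
  using fun_cong[OF fun_cong[OF feq_comp_self[OF Ff]]] unfolding rel_comp_def by simp
lemma SUPE: "(SUP y. mul (E x y) (E y z)) = E x z"
  using fun_cong[OF fun_cong[OF feq_comp_self[OF Ef]]] unfolding rel_comp_def by simp

lemma U1: "rel_comp mul R (rel_conv R) = E"
proof (intro ext)
  fix a1 a2
  have "rel_comp mul R (rel_conv R) a1 a2 = (SUP b. mul (F (psi a1) b) (F b (psi a2)))"
    unfolding rel_comp_def rel_conv_def K1[of a1] K1'[of a2] ..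
  also have "... = F (psi a1) (psi a2)" by (rule SUPF)
  finally show "rel_comp mul R (rel_conv R) a1 a2 = E a1 a2" by (simp only: K3)
qed

lemma U2: "rel_comp mul (rel_conv R) R = F"
proof (intro ext)
  fix b1 b2
  have "rel_comp mul (rel_conv R) R b1 b2 = (SUP a. mul (E (phi b1) a) (E a (phi b2)))"
    unfolding rel_comp_def rel_conv_def K2[of _ b2] K2'[of _ b1] ..
  also have "... = E (phi b1) (phi b2)" by (rule SUPE)
  also have "... = R (phi b1) b2" by (simp only: K2)
  also have "... = F (psi (phi b1)) b2" by (rule K1)
  also have "... = F b1 b2" by (simp only: Fpp)
  finally show "rel_comp mul (rel_conv R) R b1 b2 = F b1 b2" .
qed

lemma U3: "rel_comp mul R F = R"
proof (intro ext)
  fix a b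
  have "rel_comp mul R F a b = (SUP b'. mul (F (psi a) b') (F b' b))"
    unfolding rel_comp_def K1[of a] ..
  also have "... = F (psi a) b" by (rule SUPF)
  finally show "rel_comp mul R F a b = R a b" by (simp only: K1)
qed

lemma U3': "rel_comp mul F (rel_conv R) = rel_conv R"
  using arg_cong[OF U3, of rel_conv] by (simp only: conv_comp feq_conv[OF Ff])

lemma RWR: "rel_comp mul (rel_comp mul R W) (rel_conv R) a1 a2
   = rel_comp mul (rel_comp mul F W) F (psi a1) (psi a2)"
  unfolding rel_comp_def rel_conv_def K1[of a1] K1'[of a2] ..

lemma tilde: "rel_tilde res R (E a) = F (psi a)"
proof -
  define a' where "a' = (SOME a'. E a' = E a)"
  have "E a' = E a" unfolding a'_def by (rule someI) simp
  then have "E a' a = top" by (rule feq_eq_top[OF Ef])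
  then have "F (psi a') (psi a) = top" by (simp add: K3)
  then have "F (psi a') = F (psi a)" by (rule feq_top_eq[OF Ff])
  moreover have "rel_tilde res R (E a) = F (psi a')"
    unfolding rel_tilde_def a'_def psi_def by simp
  ultimately show ?thesis by simp
qed

lemma tilde_bij: "bij_betw (rel_tilde res R) (quot_carrier E) (quot_carrier F)"
  unfolding bij_betw_def quot_carrier_def
proof
  show "inj_on (rel_tilde res R) (range E)"
  proof (rule inj_onI)
    fix x y assume "x \<in> range E" "y \<in> range E" "rel_tilde res R x = rel_tilde res R y"
    then obtain a1 a2 where x: "x = E a1" and y: "y = E a2" and "F (psi a1) = F (psi a2)"
      using tilde by auto
    then have "F (psi a1) (psi a2) = top" by (simp add: feq_eq_top[OF Ff])
    then have "E a1 a2 = top" by (simp add: K3)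
    then show "x = y" using x y feq_top_eq[OF Ef] by simp
  qed
  show "rel_tilde res R ` range E = range F"
  proof
    show "rel_tilde res R ` range E \<subseteq> range F" using tilde by auto
    show "range F \<subseteq> rel_tilde res R ` range E"
    proof
      fix C assume "C \<in> range F"
      then obtain b where "C = F b" by auto
      then have "C = rel_tilde res R (E (phi b))" by (simp add: tilde Fpp)
      then show "C \<in> rel_tilde res R ` range E" by auto
    qed
  qed
qed

lemma iso_iff: "frs_iso (quot_carrier E) (quot_rel mul E V) (quot_carrier F) (quot_rel mul F W) (rel_tilde res R)
  \<longleftrightarrow> (\<forall>i a1 a2. rel_comp mul (rel_comp mul E (V i)) E a1 a2 = rel_comp mul (rel_comp mul F (W i)) F (psi a1) (psi a2))"
  unfolding frs_iso_def using tilde_bij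
  by (auto simp: quot_carrier_def tilde quot_rel_eq[OF Ef] quot_rel_eq[OF Ff])

end

theorem theorem7p2:
  fixes mul res :: "'l::complete_lattice \<Rightarrow> 'l \<Rightarrow> 'l"
    and V :: "'i \<Rightarrow> 'a \<Rightarrow> 'a \<Rightarrow> 'l" and W :: "'i \<Rightarrow> 'b \<Rightarrow> 'b \<Rightarrow> 'l"
    and R Z :: "'a \<Rightarrow> 'b \<Rightarrow> 'l"
  assumes "complete_residuated_lattice mul res"
    and "uniform_rel mul res R"
    and "R \<le> Z"
  shows "WL23 mul V W Z R \<longleftrightarrow>
     (WL14 mul V (rel_comp mul Z (rel_conv Z)) (fkernel res R) \<and>
      WL14 mul W (rel_comp mul (rel_conv Z) Z) (cokernel res R) \<and>
      frs_iso (quot_carrier (fkernel res R)) (quot_rel mul (fkernel res R) V)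
              (quot_carrier (cokernel res R)) (quot_rel mul (cokernel res R) W)
              (rel_tilde res R))"
proof -
  interpret u: unif mul res R by unfold_locales (fact assms(1), fact assms(2))
  let ?E = "fkernel res R" and ?F = "cokernel res R"
  have Ec: "rel_conv ?E = ?E" by (rule u.feq_conv[OF u.Ef])
  have Fc: "rel_conv ?F = ?F" by (rule u.feq_conv[OF u.Ff])
  have RZ: "rel_conv R \<le> rel_conv Z" by (rule u.conv_mono[OF assms(3)])
  have EZ: "?E \<le> rel_comp mul Z (rel_conv Z)"
    unfolding u.U1[symmetric] by (rule u.comp_mono[OF assms(3) RZ])
  have FZ: "?F \<le> rel_comp mul (rel_conv Z) Z"
    unfolding u.U2[symmetric] by (rule u.comp_mono[OF RZ assms(3)])
  have RE: "rel_comp mul (rel_conv R) ?E = rel_conv R"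
  proof -
    have "rel_comp mul (rel_conv R) ?E = rel_comp mul (rel_comp mul (rel_conv R) R) (rel_conv R)"
      by (simp only: u.U1[symmetric] u.comp_assoc)
    also have "... = rel_conv R" by (simp only: u.U2 u.U3')
    finally show ?thesis .
  qed
  show ?thesis
  proof
    assume H: "WL23 mul V W Z R"
    then have H1: "\<And>i. rel_comp mul (rel_conv R) (V i) \<le> rel_comp mul (W i) (rel_conv R)"
      and H2: "\<And>i. rel_comp mul R (W i) \<le> rel_comp mul (V i) R" unfolding WL23_def by auto
    have EV: "rel_comp mul ?E (V i) \<le> rel_comp mul R (rel_comp mul (W i) (rel_conv R))" for i
    proof -
      have "rel_comp mul ?E (V i) = rel_comp mul R (rel_comp mul (rel_conv R) (V i))"
        by (simp only: u.U1[symmetric] u.comp_assoc)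
      also have "... \<le> rel_comp mul R (rel_comp mul (W i) (rel_conv R))"
        by (rule u.comp_mono[OF order_refl H1])
      finally show ?thesis .
    qed
    have RWRle: "rel_comp mul R (rel_comp mul (W i) (rel_conv R)) \<le> rel_comp mul (V i) ?E" for i
    proof -
      have "rel_comp mul R (rel_comp mul (W i) (rel_conv R)) = rel_comp mul (rel_comp mul R (W i)) (rel_conv R)"
        by (simp only: u.comp_assoc)
      also have "... \<le> rel_comp mul (rel_comp mul (V i) R) (rel_conv R)"
        by (rule u.comp_mono[OF H2 order_refl])
      also have "... = rel_comp mul (V i) ?E" by (simp only: u.comp_assoc u.U1)
      finally show ?thesis .
    qed
    have i1: "rel_comp mul ?E (V i) \<le> rel_comp mul (V i) ?E" for i
      using EV RWRle by (rule order_trans)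
    have FW: "rel_comp mul ?F (W i) \<le> rel_comp mul (W i) ?F" for i
    proof -
      have "rel_comp mul ?F (W i) = rel_comp mul (rel_conv R) (rel_comp mul R (W i))"
        by (simp only: u.U2[symmetric] u.comp_assoc)
      also have "... \<le> rel_comp mul (rel_conv R) (rel_comp mul (V i) R)"
        by (rule u.comp_mono[OF order_refl H2])
      also have "... = rel_comp mul (rel_comp mul (rel_conv R) (V i)) R"
        by (simp only: u.comp_assoc)
      also have "... \<le> rel_comp mul (rel_comp mul (W i) (rel_conv R)) R"
        by (rule u.comp_mono[OF H1 order_refl])
      also have "... = rel_comp mul (W i) ?F" by (simp only: u.comp_assoc u.U2)
      finally show ?thesis .
    qed
    have EVE: "rel_comp mul (rel_comp mul ?E (V i)) ?E = rel_comp mul (rel_comp mul R (W i)) (rel_conv R)" for i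
    proof (rule antisym)
      have "rel_comp mul (rel_comp mul ?E (V i)) ?E \<le> rel_comp mul (rel_comp mul R (rel_comp mul (W i) (rel_conv R))) ?E"
        by (rule u.comp_mono[OF EV order_refl])
      also have "... = rel_comp mul R (rel_comp mul (W i) (rel_comp mul (rel_conv R) ?E))"
        by (simp only: u.comp_assoc)
      also have "... = rel_comp mul (rel_comp mul R (W i)) (rel_conv R)"
        by (simp only: RE u.comp_assoc)
      finally show "rel_comp mul (rel_comp mul ?E (V i)) ?E \<le> rel_comp mul (rel_comp mul R (W i)) (rel_conv R)" .
      have "rel_comp mul (rel_comp mul R (W i)) (rel_conv R) \<le> rel_comp mul (V i) ?E"
        using RWRle by (simp only: u.comp_assoc)
      also have "... \<le> rel_comp mul ?E (rel_comp mul (V i) ?E)" by (rule u.feq_refl_l[OF u.Ef])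
      also have "... = rel_comp mul (rel_comp mul ?E (V i)) ?E" by (simp only: u.comp_assoc)
      finally show "rel_comp mul (rel_comp mul R (W i)) (rel_conv R) \<le> rel_comp mul (rel_comp mul ?E (V i)) ?E" .
    qed
    have iso: "frs_iso (quot_carrier ?E) (quot_rel mul ?E V) (quot_carrier ?F) (quot_rel mul ?F W) (rel_tilde res R)"
      unfolding u.iso_iff by (simp add: EVE u.RWR)
    show "WL14 mul V (rel_comp mul Z (rel_conv Z)) ?E \<and>
      WL14 mul W (rel_comp mul (rel_conv Z) Z) ?F \<and>
      frs_iso (quot_carrier ?E) (quot_rel mul ?E V) (quot_carrier ?F) (quot_rel mul ?F W) (rel_tilde res R)"
      unfolding WL14_def Ec Fc using i1 FW EZ FZ iso by blast
  next
    assume H: "WL14 mul V (rel_comp mul Z (rel_conv Z)) ?E \<and>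
      WL14 mul W (rel_comp mul (rel_conv Z) Z) ?F \<and>
      frs_iso (quot_carrier ?E) (quot_rel mul ?E V) (quot_carrier ?F) (quot_rel mul ?F W) (rel_tilde res R)"
    then have EV: "\<And>i. rel_comp mul ?E (V i) \<le> rel_comp mul (V i) ?E"
      and FW: "\<And>i. rel_comp mul ?F (W i) \<le> rel_comp mul (W i) ?F"
      and iso: "\<And>i a1 a2. rel_comp mul (rel_comp mul ?E (V i)) ?E a1 a2
          = rel_comp mul (rel_comp mul ?F (W i)) ?F (u.psi a1) (u.psi a2)"
      unfolding WL14_def u.iso_iff by auto
    have EVE: "\<And>i. rel_comp mul (rel_comp mul ?E (V i)) ?E = rel_comp mul (V i) ?E"
      by (rule u.EVE_eq[OF u.Ef EV])
    have FWF: "\<And>i. rel_comp mul (rel_comp mul ?F (W i)) ?F = rel_comp mul (W i) ?F"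
      by (rule u.EVE_eq[OF u.Ff FW])
    have H1: "rel_comp mul (rel_conv R) (V i) \<le> rel_comp mul (W i) (rel_conv R)" for i
    proof (intro le_funI)
      fix b a
      have "rel_comp mul (rel_conv R) (V i) b a = rel_comp mul ?E (V i) (u.phi b) a"
        unfolding rel_comp_def rel_conv_def u.K2'[of _ b] ..
      also have "... \<le> rel_comp mul (V i) ?E (u.phi b) a" using le_funD[OF le_funD[OF EV]] .
      also have "... = rel_comp mul (rel_comp mul ?E (V i)) ?E (u.phi b) a" by (simp only: EVE)
      also have "... = rel_comp mul (rel_comp mul ?F (W i)) ?F (u.psi (u.phi b)) (u.psi a)" by (rule iso)
      also have "... = rel_comp mul (rel_comp mul ?F (W i)) ?F b (u.psi a)"
        by (rule u.compat[OF u.Ff u.Fpp refl])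
      also have "... = rel_comp mul (W i) ?F b (u.psi a)" by (simp only: FWF)
      also have "... = rel_comp mul (W i) (rel_conv R) b a"
        unfolding rel_comp_def rel_conv_def u.K1'[of a] ..
      finally show "rel_comp mul (rel_conv R) (V i) b a \<le> rel_comp mul (W i) (rel_conv R) b a" .
    qed
    have H2: "rel_comp mul R (W i) \<le> rel_comp mul (V i) R" for i
    proof (intro le_funI)
      fix a b
      have "rel_comp mul R (W i) a b = rel_comp mul ?F (W i) (u.psi a) b"
        unfolding rel_comp_def u.K1[of a] ..
      also have "... \<le> rel_comp mul (W i) ?F (u.psi a) b" using le_funD[OF le_funD[OF FW]] .
      also have "... = rel_comp mul (rel_comp mul ?F (W i)) ?F (u.psi a) b" by (simp only: FWF)
      also have "... = rel_comp mul (rel_comp mul ?F (W i)) ?F (u.psi a) (u.psi (u.phi b))"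
        by (rule u.compat[OF u.Ff refl u.Fpp[symmetric]])
      also have "... = rel_comp mul (rel_comp mul ?E (V i)) ?E a (u.phi b)" by (rule iso[symmetric])
      also have "... = rel_comp mul (V i) ?E a (u.phi b)" by (simp only: EVE)
      also have "... = rel_comp mul (V i) R a b"
        unfolding rel_comp_def u.K2[of _ b] ..
      finally show "rel_comp mul R (W i) a b \<le> rel_comp mul (V i) R a b" .
    qed
    show "WL23 mul V W Z R" unfolding WL23_def using H1 H2 assms(3) by blast
  qed
qed

end
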